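(* Let $\mathcal H\subseteq\mathcal Y^{\mathcal X}$, $S\in\mathcal X^n$. Then $\mathsf{Hall}^{\mathrm{ag}}(G_{\mathrm{ag}}(\mathcal H|_S))$ is the greatest (supremum) $\alpha$ for which $G_{\mathrm{ag}}(\mathcal H|_S)$ is $\alpha$-agnostic-orientable, where orientations may be randomized (fractional).
   Context: For $S=(x_1,\dots,x_n)$ and $v\in\mathcal Y^n$, $\|v-\mathcal H\|_0=\min_{h\in\mathcal H}|\{i:h(x_i)\ne v_i\}|$. The agnostic one-inclusion graph $G_{\mathrm{ag}}(\mathcal H|_S)=(V,E)$ has $V=\mathcal Y^n$ and one edge for each $i\in[n]$ and each labeling $e$ of the coordinates other than $i$, incident to all $v$ agreeing with $e$ off coordinate $i$. A randomized (fractional) orientation assigns each edge a probability distribution over its incident vertices; indegree = total amount received. $G_{\mathrm{ag}}(\mathcal H|_S)$ is $\alpha$-agnostic-orientable if some such orientation gives every vertex $v$ indegree $\ge\alpha-\|v-\mathcal H\|_0$. For $U\subseteq V$, $E[U]$ is the set of edges with an incident node in $U$, and $\mathsf{Hall}^{\mathrm{ag}}(G_{\mathrm{ag}}(\mathcal H|_S))=\inf\big\{\big(|E[U]|+\sum_{u\in U}\|u-\mathcal H\|_0\big)/|U|: U\subseteq V, 0<|U|<\infty\big\}$. *)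

theory Defs
  imports "HOL-Probability.Probability_Mass_Function"
begin

definition restrict_to :: "('x \<Rightarrow> 'y) set \<Rightarrow> 'x list \<Rightarrow> 'y list set" where
  "restrict_to H S = (\<lambda>h. map h S) ` H"

definition dist_to_class :: "('x \<Rightarrow> 'y) set \<Rightarrow> 'x list \<Rightarrow> 'y list \<Rightarrow> nat" where
  "dist_to_class H S v =
     Min ((\<lambda>w. card {i. i < length S \<and> w ! i \<noteq> v ! i}) ` restrict_to H S)"

definition ag_vertices :: "nat \<Rightarrow> 'y list set" where
  "ag_vertices n = {v. length v = n}"

definition del_at :: "nat \<Rightarrow> 'y list \<Rightarrow> 'y list" where
  "del_at i v = take i v @ drop (Suc i) v"

text \<open>Edges are pairs (i,e), i < n, e a labeling of the coordinates other than i;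
  edge (i,e) is incident to exactly those v with del_at i v = e.\<close>
definition ag_edges :: "nat \<Rightarrow> (nat \<times> 'y list) set" where
  "ag_edges n = {(i, e). i < n \<and> length e = n - 1}"

definition incident :: "nat \<times> 'y list \<Rightarrow> 'y list \<Rightarrow> bool" where
  "incident ed v = (fst ed < length v \<and> del_at (fst ed) v = snd ed)"

definition edges_of :: "nat \<Rightarrow> 'y list set \<Rightarrow> (nat \<times> 'y list) set" where
  "edges_of n U = {ed \<in> ag_edges n. \<exists>u \<in> U. incident ed u}"

definition Hall_ag :: "('x \<Rightarrow> 'y) set \<Rightarrow> 'x list \<Rightarrow> real" where
  "Hall_ag H S = Inf {(real (card (edges_of (length S) U))
                        + (\<Sum>u\<in>U. real (dist_to_class H S u))) / real (card U)
                      | U. U \<subseteq> ag_vertices (length S) \<and> finite U \<and> U \<noteq> {}}"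

text \<open>A randomized orientation: each edge (i,e) gets a probability distribution over
  its incident vertices. The incident vertices of (i,e) are in bijection with the
  label y placed at coordinate i, so the distribution is a pmf over 'y.\<close>
definition indegree :: "nat \<Rightarrow> (nat \<Rightarrow> 'y list \<Rightarrow> 'y pmf) \<Rightarrow> 'y list \<Rightarrow> real" where
  "indegree n ori v = (\<Sum>i<n. pmf (ori i (del_at i v)) (v ! i))"

definition ag_orientable :: "('x \<Rightarrow> 'y) set \<Rightarrow> 'x list \<Rightarrow> real \<Rightarrow> bool" where
  "ag_orientable H S \<alpha> =
     (\<exists>ori :: nat \<Rightarrow> 'y list \<Rightarrow> 'y pmf. \<forall>v \<in> ag_vertices (length S).
        indegree (length S) ori v \<ge> \<alpha> - real (dist_to_class H S v))"

end

theory Submission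
  imports Defs
begin


definition hallc :: "'i set \<Rightarrow> ('i \<times> 'b) set \<Rightarrow> bool" where
  "hallc I R = (\<forall>J\<subseteq>I. finite J \<longrightarrow> card J \<le> card (R `` J))"

lemma fin_img:
  assumes fin: "\<forall>i\<in>I. finite (A i)" and "R \<subseteq> Sigma I A" and "finite J" and "J \<subseteq> I"
  shows "finite (R `` J)"
proof -
  have "R `` J \<subseteq> \<Union>(A ` J)" using assms by auto
  moreover have "finite (\<Union>(A ` J))" using assms by auto
  ultimately show ?thesis by (rule finite_subset)
qed

lemma hall_minimal_single:
  assumes fin: "\<forall>i\<in>I. finite (A i)"
    and RS: "R \<subseteq> Sigma I A" and hR: "hallc I R"
    and minR: "\<And>R'. R' \<subseteq> R \<Longrightarrow> hallc I R' \<Longrightarrow> R' = R"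
    and iI: "i \<in> I" and x: "x \<in> R `` {i}" and y: "y \<in> R `` {i}" and xy: "x \<noteq> y"
  shows False
proof -
  have fimg: "\<And>K. finite K \<Longrightarrow> K \<subseteq> I \<Longrightarrow> finite (R `` K)"
    using fin_img[OF fin RS] by blast
  have ex: "\<exists>J. J \<subseteq> I \<and> finite J \<and> i \<in> J \<and> card J > card ((R - {(i,z)}) `` J)
             \<and> card J = card (J - {i}) + 1
             \<and> card ((R `` (J - {i})) \<union> (R `` {i} - {z})) < card J"
    if z: "z \<in> R `` {i}" for z
  proof -
    have "R - {(i,z)} \<noteq> R" using z by auto
    hence "\<not> hallc I (R - {(i,z)})" using minR[of "R - {(i,z)}"] by blast
    then obtain J where J: "J \<subseteq> I" "finite J" "card J > card ((R - {(i,z)}) `` J)"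
      unfolding hallc_def by auto
    have iJ: "i \<in> J"
    proof (rule ccontr)
      assume "i \<notin> J"
      hence "(R - {(i,z)}) `` J = R `` J" by auto
      thus False using J hR unfolding hallc_def by auto
    qed
    have sub: "(R `` (J - {i})) \<union> (R `` {i} - {z}) \<subseteq> (R - {(i,z)}) `` J"
      using iJ by auto
    have "finite ((R - {(i,z)}) `` J)"
      using fimg[OF J(2) J(1)] by (rule finite_subset[rotated]) auto
    hence "card ((R `` (J - {i})) \<union> (R `` {i} - {z})) \<le> card ((R - {(i,z)}) `` J)"
      using sub by (rule card_mono)
    hence lt: "card ((R `` (J - {i})) \<union> (R `` {i} - {z})) < card J"
      using J(3) by (rule le_less_trans)
    have ceq: "card J = card (J - {i}) + 1"
      using iJ J(2) by (metis card_Suc_Diff1 Suc_eq_plus1)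
    show ?thesis
      apply (rule exI[of _ J])
      using J(1,2,3) iJ ceq lt by blast
  qed
  obtain J1 where J1: "J1 \<subseteq> I" "finite J1" "i \<in> J1" "card J1 = card (J1 - {i}) + 1"
     "card ((R `` (J1 - {i})) \<union> (R `` {i} - {x})) < card J1"
    using ex[OF x] by blast
  obtain J2 where J2: "J2 \<subseteq> I" "finite J2" "i \<in> J2" "card J2 = card (J2 - {i}) + 1"
     "card ((R `` (J2 - {i})) \<union> (R `` {i} - {y})) < card J2"
    using ex[OF y] by blast
  define K1 where "K1 = J1 - {i}"
  define K2 where "K2 = J2 - {i}"
  define S1 where "S1 = (R `` K1) \<union> (R `` {i} - {x})"
  define S2 where "S2 = (R `` K2) \<union> (R `` {i} - {y})"
  have fK: "finite K1" "finite K2" "K1 \<subseteq> I" "K2 \<subseteq> I" "i \<notin> K1" "i \<notin> K2"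
    using J1 J2 unfolding K1_def K2_def by auto
  have fRi: "finite (R `` {i})" using fimg[of "{i}"] iI by auto
  have fS: "finite S1" "finite S2" unfolding S1_def S2_def using fimg fK fRi by auto
  have U: "R `` (insert i (K1 \<union> K2)) \<subseteq> S1 \<union> S2"
    unfolding S1_def S2_def using xy by auto
  have In: "R `` (K1 \<inter> K2) \<subseteq> S1 \<inter> S2"
    unfolding S1_def S2_def by auto
  have "insert i (K1 \<union> K2) \<subseteq> I" "finite (insert i (K1 \<union> K2))" using fK iI by auto
  hence "card (insert i (K1 \<union> K2)) \<le> card (R `` (insert i (K1 \<union> K2)))"
    using hR unfolding hallc_def by blast
  also have "\<dots> \<le> card (S1 \<union> S2)" using U fS by (simp add: card_mono)
  finally have c1: "card (K1 \<union> K2) + 1 \<le> card (S1 \<union> S2)"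
    using fK by simp
  have "K1 \<inter> K2 \<subseteq> I" "finite (K1 \<inter> K2)" using fK by auto
  hence "card (K1 \<inter> K2) \<le> card (R `` (K1 \<inter> K2))"
    using hR unfolding hallc_def by blast
  also have "\<dots> \<le> card (S1 \<inter> S2)" using In fS by (simp add: card_mono)
  finally have c2: "card (K1 \<inter> K2) \<le> card (S1 \<inter> S2)" .
  have "card (K1 \<union> K2) + card (K1 \<inter> K2) = card K1 + card K2"
    using card_Un_Int[OF fK(1) fK(2)] by linarith
  moreover have "card (S1 \<union> S2) + card (S1 \<inter> S2) = card S1 + card S2"
    using card_Un_Int[OF fS(1) fS(2)] by linarith
  moreover have "card S1 < card J1" using J1(5) unfolding S1_def K1_def .
  moreover have "card S2 < card J2" using J2(5) unfolding S2_def K2_def .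
  moreover have "card J1 = card K1 + 1" using J1(4) unfolding K1_def .
  moreover have "card J2 = card K2 + 1" using J2(4) unfolding K2_def .
  ultimately show False using c1 c2 by linarith
qed

theorem hall_infinite:
  fixes A :: "'i \<Rightarrow> 'b set"
  assumes fin: "\<forall>i\<in>I. finite (A i)"
    and hall: "\<forall>J\<subseteq>I. finite J \<longrightarrow> card J \<le> card (\<Union>(A ` J))"
  shows "\<exists>f. inj_on f I \<and> (\<forall>i\<in>I. f i \<in> A i)"
proof -
  define T where "T = Sigma I A"
  define Fam where "Fam = {T - R | R. R \<subseteq> T \<and> hallc I R}"
  have TJ: "T `` J = \<Union>(A ` J)" if "J \<subseteq> I" for J
    using that unfolding T_def by auto
  have "\<exists>M\<in>Fam. \<forall>X\<in>Fam. M \<subseteq> X \<longrightarrow> X = M"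
  proof (rule subset_Zorn)
    fix C assume C: "subset.chain Fam C"
    have CF: "C \<subseteq> Fam" using C by (simp add: subset_chain_def)
    have CT: "\<Union>C \<subseteq> T" using CF unfolding Fam_def by auto
    have "hallc I (T - \<Union>C)"
      unfolding hallc_def
    proof (intro allI impI)
      fix J assume J: "J \<subseteq> I" "finite J"
      show "card J \<le> card ((T - \<Union>C) `` J)"
      proof (cases "C = {}")
        case True
        have "card J \<le> card (\<Union>(A ` J))" using hall J by blast
        thus ?thesis using TJ[OF J(1)] True by simp
      next
        case False
        have fSJ: "finite (Sigma J A)" using J fin by auto
        have "finite (Sigma J A \<inter> \<Union>C)" using fSJ by auto
        then obtain X0 where X0: "X0 \<in> C" "Sigma J A \<inter> \<Union>C \<subseteq> X0"
          using finite_subset_Union_chain[of "Sigma J A \<inter> \<Union>C" C Fam] C False by blast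
        obtain R0 where R0: "X0 = T - R0" "R0 \<subseteq> T" "hallc I R0"
          using X0 CF unfolding Fam_def by auto
        have "R0 `` J = (T - \<Union>C) `` J"
        proof -
          have "R0 = T - X0" using R0(1,2) by blast
          moreover have "(T - X0) `` J = (T - \<Union>C) `` J"
          proof (intro set_eqI iffI)
            fix b assume "b \<in> (T - X0) `` J"
            then obtain j where j: "j \<in> J" "(j,b) \<in> T" "(j,b) \<notin> X0" by blast
            have "(j,b) \<in> Sigma J A" using j unfolding T_def by blast
            hence "(j,b) \<notin> \<Union>C" using j(3) X0(2) by blast
            thus "b \<in> (T - \<Union>C) `` J" using j by blast
          next
            fix b assume "b \<in> (T - \<Union>C) `` J"
            then obtain j where j: "j \<in> J" "(j,b) \<in> T" "(j,b) \<notin> \<Union>C" by blast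
            hence "(j,b) \<notin> X0" using X0(1) by blast
            thus "b \<in> (T - X0) `` J" using j by blast
          qed
          ultimately show ?thesis by simp
        qed
        thus ?thesis using R0(3) J unfolding hallc_def by auto
      qed
    qed
    hence "\<Union>C \<in> Fam" unfolding Fam_def using CT by auto
    thus "\<exists>U\<in>Fam. \<forall>X\<in>C. X \<subseteq> U" by blast
  qed
  then obtain M where M: "M \<in> Fam" "\<And>X. X \<in> Fam \<Longrightarrow> M \<subseteq> X \<Longrightarrow> X = M" by blast
  obtain R where R: "M = T - R" "R \<subseteq> T" "hallc I R" using M(1) unfolding Fam_def by auto
  have minR: "R' = R" if "R' \<subseteq> R" "hallc I R'" for R'
  proof -
    have "T - R' \<in> Fam" using that R unfolding Fam_def by auto
    moreover have "M \<subseteq> T - R'" using R that by auto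
    ultimately have "T - R' = T - R" using M(2) R by auto
    thus ?thesis using that R by auto
  qed
  have RS: "R \<subseteq> Sigma I A" using R T_def by simp
  have one: "\<exists>b. R `` {i} = {b}" if iI: "i \<in> I" for i
  proof -
    have "{i} \<subseteq> I" "finite {i}" using iI by auto
    hence "card {i} \<le> card (R `` {i})" using R(3) unfolding hallc_def by blast
    hence "R `` {i} \<noteq> {}" by auto
    then obtain b where b: "b \<in> R `` {i}" by blast
    have "y = b" if y: "y \<in> R `` {i}" for y
    proof (rule ccontr)
      assume "y \<noteq> b"
      hence "b \<noteq> y" by simp
      from hall_minimal_single[OF fin RS R(3) minR iI b y this] show False .
    qed
    hence "R `` {i} = {b}" using b by blast
    thus ?thesis by blast
  qed
  define f where "f i = the_elem (R `` {i})" for i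
  have fi: "R `` {i} = {f i}" if ii: "i \<in> I" for i
  proof -
    obtain b where b: "R `` {i} = {b}" using one[OF ii] by blast
    thus ?thesis unfolding f_def by simp
  qed
  have "inj_on f I"
  proof (rule inj_onI)
    fix i j assume ij: "i \<in> I" "j \<in> I" "f i = f j"
    show "i = j"
    proof (rule ccontr)
      assume "i \<noteq> j"
      hence "card {i,j} = 2" by simp
      moreover have "R `` {i,j} = R `` {i} \<union> R `` {j}" by auto
      hence "R `` {i,j} = {f i}" using fi[OF ij(1)] fi[OF ij(2)] ij(3) by simp
      moreover have "{i,j} \<subseteq> I" "finite {i,j}" using ij by auto
      hence "card {i,j} \<le> card (R `` {i,j})" using R(3) unfolding hallc_def by blast
      ultimately show False by simp
    qed
  qed
  moreover have "\<forall>i\<in>I. f i \<in> A i"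
  proof
    fix i assume i: "i \<in> I"
    hence "(i, f i) \<in> R" using fi[OF i] by blast
    thus "f i \<in> A i" using RS by blast
  qed
  ultimately show ?thesis by blast
qed



lemma len_del_at: "i < length v \<Longrightarrow> length (del_at i v) = length v - 1"
  unfolding del_at_def by simp

lemma del_at_inj:
  assumes "length u = length u'" "i < length u" "del_at i u = del_at i u'" "u ! i = u' ! i"
  shows "u = u'"
proof -
  have t1: "take i (del_at i u) = take i u" using assms(2) unfolding del_at_def by simp
  have t2: "drop i (del_at i u) = drop (Suc i) u" using assms(2) unfolding del_at_def by simp
  have t3: "take i (del_at i u') = take i u'" using assms(1,2) unfolding del_at_def by simp
  have t4: "drop i (del_at i u') = drop (Suc i) u'" using assms(1,2) unfolding del_at_def by simp
  have e1: "take i u = take i u'" using t1 t3 assms(3) by simp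
  have e2: "drop (Suc i) u = drop (Suc i) u'" using t2 t4 assms(3) by simp
  have "u = take i u @ u ! i # drop (Suc i) u" using assms(2) by (rule id_take_nth_drop)
  also have "\<dots> = take i u' @ u' ! i # drop (Suc i) u'"
    by (simp only: e1 e2 assms(4))
  also have "\<dots> = u'" using assms(1,2) by (simp only: id_take_nth_drop[symmetric])
  finally show ?thesis .
qed

lemma edges_of_eq:
  assumes "U \<subseteq> ag_vertices n"
  shows "edges_of n U = (\<lambda>(i,u). (i, del_at i u)) ` ({..<n} \<times> U)"
proof (intro set_eqI iffI)
  fix ed assume "ed \<in> edges_of n U"
  then obtain u where u: "u \<in> U" "incident ed u" "ed \<in> ag_edges n" unfolding edges_of_def by blast
  obtain i e where ed: "ed = (i,e)" by (cases ed)
  have ie: "i < n" "e = del_at i u" using u ed unfolding ag_edges_def incident_def by auto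
  have "(i,u) \<in> {..<n} \<times> U" using ie u by simp
  moreover have "ed = (\<lambda>(i,u). (i, del_at i u)) (i,u)" using ed ie by simp
  ultimately show "ed \<in> (\<lambda>(i,u). (i, del_at i u)) ` ({..<n} \<times> U)" by (rule rev_image_eqI)
next
  fix ed assume "ed \<in> (\<lambda>(i,u). (i, del_at i u)) ` ({..<n} \<times> U)"
  then obtain x where x: "x \<in> {..<n} \<times> U" "ed = (\<lambda>(i,u). (i, del_at i u)) x" by (rule imageE)
  obtain i u where xx: "x = (i,u)" by (cases x)
  have iu: "i < n" "u \<in> U" "ed = (i, del_at i u)" using x xx by auto
  have lu: "length u = n" using iu assms unfolding ag_vertices_def by auto
  have "ed \<in> ag_edges n" using iu lu len_del_at[of i u] unfolding ag_edges_def by auto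
  moreover have "incident ed u" using iu lu unfolding incident_def by simp
  ultimately show "ed \<in> edges_of n U" using iu unfolding edges_of_def by blast
qed

lemma finite_edges_of:
  assumes "U \<subseteq> ag_vertices n" "finite U"
  shows "finite (edges_of n U)"
  using edges_of_eq[OF assms(1)] assms(2) by simp

definition ratio :: "('x \<Rightarrow> 'y) set \<Rightarrow> 'x list \<Rightarrow> 'y list set \<Rightarrow> real" where
  "ratio H S U = (real (card (edges_of (length S) U))
                        + (\<Sum>u\<in>U. real (dist_to_class H S u))) / real (card U)"

lemma Hall_ag_eq: "Hall_ag H S = Inf {ratio H S U | U. U \<subseteq> ag_vertices (length S) \<and> finite U \<and> U \<noteq> {}}"
  unfolding Hall_ag_def ratio_def by simp

lemma easy:
  fixes H :: "('x \<Rightarrow> 'y) set" and S :: "'x list" and ori :: "nat \<Rightarrow> 'y list \<Rightarrow> 'y pmf"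
  assumes U: "U \<subseteq> ag_vertices (length S)" "finite U" "U \<noteq> {}"
    and ori: "\<forall>v \<in> ag_vertices (length S). indegree (length S) ori v \<ge> \<alpha> - real (dist_to_class H S v)"
  shows "\<alpha> \<le> ratio H S U"
proof -
  define n where "n = length S"
  define g where "g = (\<lambda>(i::nat,u::'y list). (i, del_at i u))"
  define h where "h = (\<lambda>(i::nat,u::'y list). pmf (ori i (del_at i u)) (u ! i))"
  have lenU: "\<And>u. u \<in> U \<Longrightarrow> length u = n" using U unfolding ag_vertices_def n_def by auto
  have EU: "edges_of n U = g ` ({..<n} \<times> U)"
    using edges_of_eq[of U n] U unfolding g_def n_def by simp
  have fE: "finite (edges_of n U)" using EU U by simp
  have "(\<Sum>u\<in>U. indegree n ori u) = (\<Sum>u\<in>U. \<Sum>i<n. h (i,u))"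
    unfolding indegree_def h_def by simp
  also have "\<dots> = (\<Sum>x\<in>{..<n} \<times> U. h x)"
    by (subst sum.swap) (simp add: sum.cartesian_product)
  also have "\<dots> = (\<Sum>ed\<in>edges_of n U. \<Sum>x\<in>{x\<in>{..<n} \<times> U. g x = ed}. h x)"
    by (rule sum.group[symmetric]) (use U fE EU in auto)
  also have "\<dots> \<le> (\<Sum>ed\<in>edges_of n U. 1)"
  proof (rule sum_mono)
    fix ed assume "ed \<in> edges_of n U"
    obtain i0 e where ed: "ed = (i0, e)" by (cases ed)
    define X where "X = {x\<in>{..<n} \<times> U. g x = ed}"
    define k where "k = (\<lambda>(i::nat, u::'y list). u ! i)"
    have Xi: "\<And>i u. (i,u) \<in> X \<Longrightarrow> i = i0 \<and> i < n \<and> u \<in> U \<and> del_at i u = e"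
      unfolding X_def g_def ed by auto
    have inj: "inj_on k X"
    proof (rule inj_onI)
      fix x y assume xy: "x \<in> X" "y \<in> X" "k x = k y"
      obtain i u where x: "x = (i,u)" by (cases x)
      obtain i' u' where y: "y = (i',u')" by (cases y)
      have a: "i = i0" "i < n" "u \<in> U" "del_at i u = e" using Xi xy(1) x by auto
      have b: "i' = i0" "u' \<in> U" "del_at i' u' = e" using Xi xy(2) y by auto
      have "u = u'"
        by (rule del_at_inj[of u u' i]) (use a b lenU xy(3) x y k_def in auto)
      thus "x = y" using a b x y by simp
    qed
    have "(\<Sum>x\<in>X. h x) = (\<Sum>x\<in>X. pmf (ori i0 e) (k x))"
      by (rule sum.cong) (auto simp: h_def k_def dest: Xi)
    also have "\<dots> = (\<Sum>y\<in>k ` X. pmf (ori i0 e) y)"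
      using inj by (simp add: sum.reindex)
    also have "\<dots> = measure (measure_pmf (ori i0 e)) (k ` X)"
      using U by (simp add: measure_measure_pmf_finite X_def)
    also have "\<dots> \<le> 1" by simp
    finally show "(\<Sum>x\<in>{x\<in>{..<n} \<times> U. g x = ed}. h x) \<le> 1" unfolding X_def .
  qed
  also have "\<dots> = real (card (edges_of n U))" by simp
  finally have up: "(\<Sum>u\<in>U. indegree n ori u) \<le> real (card (edges_of n U))" .
  have "(\<Sum>u\<in>U. \<alpha> - real (dist_to_class H S u)) \<le> (\<Sum>u\<in>U. indegree n ori u)"
    using ori U unfolding n_def by (intro sum_mono) auto
  moreover have "(\<Sum>u\<in>U. \<alpha> - real (dist_to_class H S u)) = real (card U) * \<alpha> - (\<Sum>u\<in>U. real (dist_to_class H S u))"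
    by (simp add: sum_subtractf)
  ultimately have le: "real (card U) * \<alpha> \<le> real (card (edges_of n U)) + (\<Sum>u\<in>U. real (dist_to_class H S u))"
    using up by linarith
  have "real (card U) > 0" using U by auto
  hence "\<alpha> \<le> (real (card (edges_of n U)) + (\<Sum>u\<in>U. real (dist_to_class H S u))) / real (card U)"
    using le by (subst pos_le_divide_eq) (auto simp: mult.commute)
  thus ?thesis unfolding ratio_def n_def .
qed

lemma pmf_ori:
  assumes "q > 0"
  shows "pmf (pmf_of_multiset (mset (map g [0..<q]))) y = real (card {j. j < q \<and> g j = y}) / real q"
proof -
  have "map g [0..<q] \<noteq> []" using assms by simp
  hence ne: "mset (map g [0..<q]) \<noteq> {#}" by (metis mset_zero_iff)
  have "count (mset (map g [0..<q])) y = card {j. j < q \<and> g j = y}"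
    unfolding count_mset count_list_eq_length_filter length_filter_conv_card
    by (intro arg_cong[where f=card]) auto
  thus ?thesis using ne by simp
qed

lemma construct:
  fixes H :: "('x \<Rightarrow> 'y) set" and S :: "'x list" and \<alpha> :: real
  assumes rat: "\<alpha> \<in> \<rat>"
    and hallU: "\<And>U. U \<subseteq> ag_vertices (length S) \<Longrightarrow> finite U \<Longrightarrow> U \<noteq> {} \<Longrightarrow> \<alpha> \<le> ratio H S U"
  shows "ag_orientable H S \<alpha>"
proof -
  define n where "n = length S"
  define V where "V = (ag_vertices n :: 'y list set)"
  define w where "w v = dist_to_class H S v" for v
  obtain a b where ab: "b > 0" "\<alpha> = of_int a / of_int b" using Rats_cases'[OF rat] by metis
  define q where "q = nat b"
  have q0: "q > 0" and bq: "b = int q" using ab unfolding q_def by auto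
  have aq: "real_of_int a = \<alpha> * real q" using ab bq by (simp add: field_simps)
  define d where "d v = nat (a - int q * int (w v))" for v
  have dge: "real (d v) \<ge> real_of_int a - real q * real (w v)" for v
  proof -
    have "a - int q * int (w v) \<le> int (nat (a - int q * int (w v)))" by simp
    hence "real_of_int (a - int q * int (w v)) \<le> real_of_int (int (nat (a - int q * int (w v))))"
      by (simp only: of_int_le_iff)
    thus ?thesis unfolding d_def by (simp only: of_int_of_nat_eq of_int_diff of_int_mult)
  qed
  have dpos: "real (d v) = real_of_int a - real q * real (w v)" if dv: "d v > 0" for v
  proof -
    have "a - int q * int (w v) > 0" using dv unfolding d_def by simp
    hence "real (nat (a - int q * int (w v))) = real_of_int (a - int q * int (w v))"
      by (simp only: of_nat_nat less_imp_le)
    thus ?thesis unfolding d_def by simp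
  qed
  define I where "I = Sigma V (\<lambda>v. {..<d v})"
  define A where "A = (\<lambda>c::'y list \<times> nat. (\<lambda>x::nat\<times>nat. ((fst x, del_at (fst x) (fst c)), snd x)) ` ({..<n} \<times> {..<q}))"
  have finA: "\<forall>c\<in>I. finite (A c)" unfolding A_def by auto
  have key: "(\<Sum>u\<in>U. d u) \<le> card (edges_of n U) * q" if UV: "U \<subseteq> V" "finite U" for U
  proof -
    define U' where "U' = {u\<in>U. d u > 0}"
    have U'U: "U' \<subseteq> U" "finite U'" using UV unfolding U'_def by auto
    have s1: "(\<Sum>u\<in>U. d u) = (\<Sum>u\<in>U'. d u)"
      by (rule sum.mono_neutral_right) (use UV U'U in \<open>auto simp: U'_def\<close>)
    show ?thesis
    proof (cases "U' = {}")
      case True thus ?thesis using s1 by simp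
    next
      case False
      have EU: "edges_of n U' \<subseteq> edges_of n U" using U'U unfolding edges_of_def by blast
      have fE: "finite (edges_of n U)" using finite_edges_of[of U n] UV unfolding V_def by simp
      have cE: "card (edges_of n U') \<le> card (edges_of n U)" using card_mono[OF fE EU] .
      have r: "\<alpha> \<le> ratio H S U'" using hallU[of U'] U'U UV False unfolding V_def n_def by auto
      have cpos: "real (card U') > 0" using U'U False by auto
      have r2: "\<alpha> * real (card U') \<le> real (card (edges_of n U')) + (\<Sum>u\<in>U'. real (w u))"
        using r cpos unfolding ratio_def w_def n_def by (simp add: pos_le_divide_eq)
      have "real (\<Sum>u\<in>U'. d u) = (\<Sum>u\<in>U'. real_of_int a - real q * real (w u))"
        unfolding of_nat_sum by (rule sum.cong) (auto simp: U'_def intro: dpos)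
      also have "\<dots> = real (card U') * (\<alpha> * real q) - real q * (\<Sum>u\<in>U'. real (w u))"
        by (simp add: sum_subtractf sum_distrib_left aq)
      also have "\<dots> = real q * (\<alpha> * real (card U') - (\<Sum>u\<in>U'. real (w u)))"
        by (simp add: algebra_simps)
      also have "\<dots> \<le> real q * real (card (edges_of n U'))"
        using r2 by (intro mult_left_mono) auto
      also have "\<dots> \<le> real q * real (card (edges_of n U))"
        using cE by (intro mult_left_mono) auto
      finally have "real (\<Sum>u\<in>U'. d u) \<le> real (card (edges_of n U) * q)" by (simp add: mult.commute)
      hence "(\<Sum>u\<in>U'. d u) \<le> card (edges_of n U) * q" by (simp only: of_nat_le_iff)
      thus ?thesis using s1 by simp
    qed
  qed
  have hallc: "\<forall>J\<subseteq>I. finite J \<longrightarrow> card J \<le> card (\<Union>(A ` J))"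
  proof (intro allI impI)
    fix J assume J: "J \<subseteq> I" "finite J"
    define U where "U = fst ` J"
    have UV: "U \<subseteq> V" "finite U" using J unfolding U_def I_def by auto
    have JS: "J \<subseteq> Sigma U (\<lambda>u. {..<d u})"
    proof
      fix c assume c: "c \<in> J"
      obtain v k where vk: "c = (v,k)" by (cases c)
      have "v \<in> U" using c vk unfolding U_def by force
      moreover have "k < d v" using c vk J unfolding I_def by auto
      ultimately show "c \<in> Sigma U (\<lambda>u. {..<d u})" using vk by simp
    qed
    have "card J \<le> card (Sigma U (\<lambda>u. {..<d u}))"
      by (rule card_mono) (use UV JS in auto)
    also have "\<dots> = (\<Sum>u\<in>U. d u)" using UV by simp
    also have "\<dots> \<le> card (edges_of n U) * q" using key[OF UV] .
    also have "\<dots> = card (edges_of n U \<times> {..<q})" by (simp add: card_cartesian_product)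
    also have "edges_of n U \<times> {..<q} = \<Union>(A ` J)"
    proof (intro set_eqI iffI)
      fix z assume z: "z \<in> edges_of n U \<times> {..<q}"
      obtain ed j where zz: "z = (ed, j)" by (cases z)
      have "ed \<in> (\<lambda>(i,u). (i, del_at i u)) ` ({..<n} \<times> U)"
        using z zz edges_of_eq[of U n] UV unfolding V_def by auto
      then obtain x where x: "x \<in> {..<n} \<times> U" "ed = (\<lambda>(i,u). (i, del_at i u)) x" by (rule imageE)
      obtain i u where xx: "x = (i,u)" by (cases x)
      obtain c where c: "c \<in> J" "fst c = u" using x xx unfolding U_def by force
      have "z = (\<lambda>x::nat\<times>nat. ((fst x, del_at (fst x) (fst c)), snd x)) (i, j)"
        using zz x xx c by simp
      moreover have "(i,j) \<in> {..<n} \<times> {..<q}" using x xx z zz by simp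
      ultimately have "z \<in> A c" unfolding A_def by (rule image_eqI)
      thus "z \<in> \<Union>(A ` J)" using c by blast
    next
      fix z assume "z \<in> \<Union>(A ` J)"
      then obtain c where c: "c \<in> J" "z \<in> A c" by blast
      have "z \<in> (\<lambda>x::nat\<times>nat. ((fst x, del_at (fst x) (fst c)), snd x)) ` ({..<n} \<times> {..<q})"
        using c(2) unfolding A_def .
      then obtain x where x: "x \<in> {..<n} \<times> {..<q}" "z = ((fst x, del_at (fst x) (fst c)), snd x)"
        by (rule imageE)
      have "(fst x, fst c) \<in> {..<n} \<times> U" using x c unfolding U_def by auto
      hence "(fst x, del_at (fst x) (fst c)) \<in> edges_of n U"
        using edges_of_eq[of U n] UV unfolding V_def by auto
      thus "z \<in> edges_of n U \<times> {..<q}" using x by auto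
    qed
    finally show "card J \<le> card (\<Union>(A ` J))" .
  qed
  obtain f where f: "inj_on f I" "\<forall>c\<in>I. f c \<in> A c" using hall_infinite[OF finA hallc] by blast
  define lab where "lab i e j = (if \<exists>c\<in>I. f c = ((i,e),j) then fst (THE c. c \<in> I \<and> f c = ((i,e),j)) ! i else undefined)" for i e j
  define ori where "ori i e = pmf_of_multiset (mset (map (lab i e) [0..<q]))" for i e
  have "\<forall>v\<in>(ag_vertices (length S) :: 'y list set). \<alpha> - real (dist_to_class H S v) \<le> indegree (length S) ori v"
  proof
    fix v :: "'y list" assume v: "v \<in> ag_vertices (length S)"
    have vV: "v \<in> V" using v unfolding V_def n_def .
    define T where "T = Sigma {..<n} (\<lambda>i. {j. j < q \<and> lab i (del_at i v) j = v ! i})"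
    define hk where "hk k = (fst (fst (f (v,k))), snd (f (v,k)))" for k
    have fk: "fst (fst (f (v,k))) < n \<and> snd (f (v,k)) < q \<and> snd (fst (f (v,k))) = del_at (fst (fst (f (v,k)))) v"
      if k: "k < d v" for k
    proof -
      have "(v,k) \<in> I" using vV k unfolding I_def by simp
      hence "f (v,k) \<in> A (v,k)" using f by blast
      then obtain x where x: "x \<in> {..<n} \<times> {..<q}" "f (v,k) = ((fst x, del_at (fst x) v), snd x)"
        unfolding A_def by auto
      thus ?thesis by auto
    qed
    have inj: "inj_on hk {..<d v}"
    proof (rule inj_onI)
      fix k k' assume kk: "k \<in> {..<d v}" "k' \<in> {..<d v}" "hk k = hk k'"
      have "f (v,k) = f (v,k')"
        using fk[of k] fk[of k'] kk unfolding hk_def by (simp add: prod_eq_iff)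
      moreover have "(v,k) \<in> I" "(v,k') \<in> I" using vV kk unfolding I_def by auto
      ultimately show "k = k'" using f(1) by (auto dest: inj_onD)
    qed
    have img: "hk ` {..<d v} \<subseteq> T"
    proof
      fix z assume "z \<in> hk ` {..<d v}"
      then obtain k where k: "k < d v" "z = hk k" by auto
      define i where "i = fst (fst (f (v,k)))"
      define j where "j = snd (f (v,k))"
      have fvk: "f (v,k) = ((i, del_at i v), j)" using fk[OF k(1)] unfolding i_def j_def by (simp add: prod_eq_iff)
      have vkI: "(v,k) \<in> I" using vV k unfolding I_def by simp
      have th: "(THE c. c \<in> I \<and> f c = ((i, del_at i v), j)) = (v,k)"
      proof (rule the_equality)
        show "(v,k) \<in> I \<and> f (v,k) = ((i, del_at i v), j)" using vkI fvk by simp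
      next
        fix c assume c: "c \<in> I \<and> f c = ((i, del_at i v), j)"
        hence "f c = f (v,k)" using fvk by simp
        thus "c = (v,k)" using inj_onD[OF f(1)] c vkI by blast
      qed
      have "lab i (del_at i v) j = v ! i" unfolding lab_def using vkI fvk th by auto
      thus "z \<in> T" using fk[OF k(1)] k(2) unfolding T_def hk_def i_def j_def by simp
    qed
    have finT: "finite T" unfolding T_def by auto
    have "d v = card (hk ` {..<d v})" using inj by (simp add: card_image)
    also have "\<dots> \<le> card T" using img finT by (rule card_mono[rotated])
    finally have dT: "d v \<le> card T" .
    have "indegree (length S) ori v = (\<Sum>i<n. real (card {j. j < q \<and> lab i (del_at i v) j = v ! i}) / real q)"
      unfolding indegree_def ori_def n_def by (intro sum.cong refl pmf_ori[OF q0])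
    also have "\<dots> = real (card T) / real q"
      unfolding T_def by (simp add: sum_divide_distrib[symmetric])
    finally have ind: "indegree (length S) ori v = real (card T) / real q" .
    have "\<alpha> - real (w v) = (real_of_int a - real q * real (w v)) / real q"
      using aq q0 by (simp add: field_simps)
    also have "\<dots> \<le> real (d v) / real q"
      using dge[of v] q0 by (simp add: divide_right_mono)
    also have "\<dots> \<le> real (card T) / real q"
      using dT q0 by (simp add: divide_right_mono)
    finally show "\<alpha> - real (dist_to_class H S v) \<le> indegree (length S) ori v"
      using ind unfolding w_def by simp
  qed
  thus ?thesis unfolding ag_orientable_def by blast
qed

theorem propositionF1:
  fixes H :: "('x \<Rightarrow> 'y) set" and S :: "'x list"
  assumes "H \<noteq> {}"
  shows "(\<forall>\<alpha>. ag_orientable H S \<alpha> \<longrightarrow> \<alpha> \<le> Hall_ag H S)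
       \<and> (\<forall>b. (\<forall>\<alpha>. ag_orientable H S \<alpha> \<longrightarrow> \<alpha> \<le> b) \<longrightarrow> Hall_ag H S \<le> b)"
proof -
  define P where "P = {ratio H S U | U. U \<subseteq> (ag_vertices (length S) :: 'y list set) \<and> finite U \<and> U \<noteq> {}}"
  have HP: "Hall_ag H S = Inf P" unfolding Hall_ag_eq P_def ..
  have "{replicate (length S) undefined} \<subseteq> (ag_vertices (length S) :: 'y list set)"
    unfolding ag_vertices_def by simp
  hence "ratio H S {replicate (length S) undefined} \<in> P" unfolding P_def by auto
  hence ne: "P \<noteq> {}" by (rule ex_in_conv[THEN iffD1, OF exI])
  have nonneg: "0 \<le> ratio H S U" for U :: "'y list set"
    unfolding ratio_def by (intro divide_nonneg_nonneg add_nonneg_nonneg sum_nonneg) auto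
  have "\<forall>x\<in>P. 0 \<le> x" unfolding P_def using nonneg by auto
  hence bdd: "bdd_below P" by (intro bdd_belowI[where m=0]) blast
  have lowU: "Hall_ag H S \<le> ratio H S U"
    if "U \<subseteq> (ag_vertices (length S) :: 'y list set)" "finite U" "U \<noteq> {}" for U
  proof -
    have "ratio H S U \<in> P" unfolding P_def using that by blast
    thus ?thesis unfolding HP using bdd by (rule cInf_lower)
  qed
  have part1: "\<alpha> \<le> Hall_ag H S" if or: "ag_orientable H S \<alpha>" for \<alpha>
  proof -
    obtain ori :: "nat \<Rightarrow> 'y list \<Rightarrow> 'y pmf" where
      ori: "\<forall>v \<in> ag_vertices (length S). indegree (length S) ori v \<ge> \<alpha> - real (dist_to_class H S v)"
      using or unfolding ag_orientable_def by blast
    have "\<alpha> \<le> Inf P"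
    proof (rule cInf_greatest[OF ne])
      fix x assume "x \<in> P"
      then obtain U where U: "x = ratio H S U" "U \<subseteq> (ag_vertices (length S) :: 'y list set)" "finite U" "U \<noteq> {}"
        unfolding P_def by blast
      show "\<alpha> \<le> x" using easy[OF U(2,3,4) ori] U(1) by simp
    qed
    thus ?thesis unfolding HP .
  qed
  have part2: "Hall_ag H S \<le> b" if bnd: "\<forall>\<alpha>. ag_orientable H S \<alpha> \<longrightarrow> \<alpha> \<le> b" for b
  proof (rule ccontr)
    assume "\<not> Hall_ag H S \<le> b"
    hence "b < Hall_ag H S" by simp
    then obtain r where r: "r \<in> \<rat>" "b < r" "r < Hall_ag H S" using Rats_dense_in_real by blast
    have "ag_orientable H S r"
    proof (rule construct[OF r(1)])
      fix U :: "'y list set" assume "U \<subseteq> ag_vertices (length S)" "finite U" "U \<noteq> {}"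
      hence "Hall_ag H S \<le> ratio H S U" by (rule lowU)
      thus "r \<le> ratio H S U" using r(3) by linarith
    qed
    hence "r \<le> b" using bnd by blast
    thus False using r(2) by linarith
  qed
  show ?thesis using part1 part2 by (intro conjI allI impI)
qed

end
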